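(* For every infinite cardinal $\kappa \le 2^{\aleph_0}$ there exist disjoint sets $A, B\subseteq \mathbb{R}$ with $|A|=|B|=\kappa$ such that $A$ and $B$ are both homogeneous and everywhere isomorphic. In particular, for every infinite cardinal $\kappa\le 2^{\aleph_0}$ there is a homogeneous suborder of $\mathbb{R}$ of cardinality $\kappa$.
   Context: A suborder $X\subseteq\mathbb{R}$ is homogeneous if $X\cong X\cap I$ (order-isomorphism) for every open interval $I=(a,b)$ with $-\infty\le a<b\le\infty$. Disjoint $A,B\subseteq\mathbb{R}$ are everywhere isomorphic if $A\cap I\cong B\cap I$ for every such open interval $I$. *)

theory Defs
  imports Complex_Main "HOL-Library.Extended_Real" "HOL-Library.Equipollence"
begin

definition oint :: "ereal \<Rightarrow> ereal \<Rightarrow> real set" where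
  "oint a b = {x::real. a < ereal x \<and> ereal x < b}"

definition order_iso :: "real set \<Rightarrow> real set \<Rightarrow> bool" where
  "order_iso X Y \<longleftrightarrow> (\<exists>f. bij_betw f X Y \<and> (\<forall>x\<in>X. \<forall>y\<in>X. x < y \<longrightarrow> f x < f y))"

definition homogeneous :: "real set \<Rightarrow> bool" where
  "homogeneous X \<longleftrightarrow> (\<forall>a b. a < b \<longrightarrow> order_iso X (X \<inter> oint a b))"

definition everywhere_iso :: "real set \<Rightarrow> real set \<Rightarrow> bool" where
  "everywhere_iso A B \<longleftrightarrow> A \<inter> B = {} \<and>
     (\<forall>a b. a < b \<longrightarrow> order_iso (A \<inter> oint a b) (B \<inter> oint a b))"

end

theory Submission
  imports Defs "HOL-Analysis.Continuum_Not_Denumerable" "HOL-Library.Countable_Set"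
begin


lemma order_iso_refl: "order_iso X X"
  unfolding order_iso_def by (rule exI[of _ id]) auto

lemma order_iso_trans:
  assumes "order_iso X Y" "order_iso Y Z" shows "order_iso X Z"
proof -
  obtain f where f: "bij_betw f X Y" "\<forall>x\<in>X. \<forall>y\<in>X. x < y \<longrightarrow> f x < f y"
    using assms(1) unfolding order_iso_def by blast
  obtain g where g: "bij_betw g Y Z" "\<forall>x\<in>Y. \<forall>y\<in>Y. x < y \<longrightarrow> g x < g y"
    using assms(2) unfolding order_iso_def by blast
  have "bij_betw (g \<circ> f) X Z" using f g bij_betw_trans by blast
  moreover have "\<forall>x\<in>X. \<forall>y\<in>X. x < y \<longrightarrow> (g \<circ> f) x < (g \<circ> f) y"
    using f g bij_betwE by (metis comp_apply)
  ultimately show ?thesis unfolding order_iso_def by blast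
qed

lemma order_iso_sym:
  assumes "order_iso X Y" shows "order_iso Y X"
proof -
  obtain f where f: "bij_betw f X Y" "\<forall>x\<in>X. \<forall>y\<in>X. x < y \<longrightarrow> f x < f y"
    using assms(1) unfolding order_iso_def by blast
  define g where "g = the_inv_into X f"
  have g: "bij_betw g Y X" using f(1) bij_betw_the_inv_into g_def by blast
  have fg: "y \<in> Y \<Longrightarrow> f (g y) = y" for y
    using f(1) unfolding g_def by (metis bij_betw_def f_the_inv_into_f)
  have "\<forall>u\<in>Y. \<forall>v\<in>Y. u < v \<longrightarrow> g u < g v"
  proof (intro ballI impI)
    fix u v assume uv: "u \<in> Y" "v \<in> Y" "u < v"
    have gu: "g u \<in> X" "g v \<in> X" using g uv bij_betwE by blast+
    show "g u < g v"
    proof (rule ccontr)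
      assume "\<not> g u < g v"
      then have "g v < g u \<or> g v = g u" by auto
      then show False
      proof
        assume "g v < g u" then have "f (g v) < f (g u)" using f(2) gu by blast
        then show False using fg uv by auto
      next
        assume "g v = g u" then have "f (g v) = f (g u)" by simp
        then show False using fg uv by auto
      qed
    qed
  qed
  then show ?thesis using g unfolding order_iso_def by blast
qed

lemma order_iso_image:
  assumes "\<forall>x\<in>X. \<forall>y\<in>X. x < y \<longrightarrow> f x < (f y::real)"
  shows "order_iso X (f ` X)"
proof -
  have "inj_on f X"
  proof (rule inj_onI)
    fix x y assume "x \<in> X" "y \<in> X" "f x = f y"
    then show "x = y" using assms by (metis less_irrefl linorder_neqE_linordered_idom)
  qed
  then show ?thesis unfolding order_iso_def using assms bij_betw_imageI by blast
qed

lemma ereal_shift_less: "ereal (x + c) < b \<longleftrightarrow> ereal x < b - ereal c"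
  by (cases b) auto

lemma ereal_shift_greater: "a < ereal (x + c) \<longleftrightarrow> a - ereal c < ereal x"
  by (cases a) auto

lemma homogeneous_translate:
  assumes "homogeneous X" shows "homogeneous ((\<lambda>x. x + c) ` X)"
  unfolding homogeneous_def
proof (intro allI impI)
  fix a b :: ereal assume ab: "a < b"
  let ?a = "a - ereal c" and ?b = "b - ereal c"
  have ab': "?a < ?b" using ab by (cases a; cases b) auto
  have eq: "(\<lambda>x. x + c) ` X \<inter> oint a b = (\<lambda>x. x + c) ` (X \<inter> oint ?a ?b)"
    unfolding oint_def by (auto simp: ereal_shift_less ereal_shift_greater)
  have m: "\<forall>x\<in>Y. \<forall>y\<in>Y. x < y \<longrightarrow> x + c < y + c" for Y :: "real set" by auto
  have "order_iso ((\<lambda>x. x + c) ` X) X" using order_iso_sym[OF order_iso_image[OF m]] .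
  also have "order_iso X (X \<inter> oint ?a ?b)" using assms ab' unfolding homogeneous_def by blast
  note order_iso_trans[OF calculation this]
  moreover have "order_iso (X \<inter> oint ?a ?b) ((\<lambda>x. x + c) ` (X \<inter> oint ?a ?b))"
    using order_iso_image[OF m] .
  ultimately show "order_iso ((\<lambda>x. x + c) ` X) ((\<lambda>x. x + c) ` X \<inter> oint a b)"
    using eq order_iso_trans by metis
qed



definition affclosed :: "real set \<Rightarrow> bool" where
  "affclosed X \<longleftrightarrow> (\<forall>x\<in>X. \<forall>r q :: rat. r \<noteq> 0 \<longrightarrow> of_rat r * x + of_rat q \<in> X)"

lemma upper_seq:
  fixes b :: ereal and m :: real
  assumes "ereal m < b"
  shows "\<exists>h::nat \<Rightarrow> real. h 0 = m \<and> (\<forall>n. h n < h (Suc n)) \<and> (\<forall>n. ereal (h n) < b)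
          \<and> (\<forall>y. ereal y < b \<longrightarrow> (\<exists>n. y < h n))"
proof (cases b)
  case (real b')
  define h where "h n = b' - (b' - m) / (real n + 1)" for n
  have mb: "m < b'" using assms real by simp
  have "h 0 = m" unfolding h_def by simp
  moreover have "\<forall>n. h n < h (Suc n)"
  proof
    fix n
    have "(b' - m) / (real n + 2) < (b' - m) / (real n + 1)"
      using mb by (intro divide_strict_left_mono) auto
    then show "h n < h (Suc n)" unfolding h_def by (simp add: add.commute)
  qed
  moreover have "\<forall>n. ereal (h n) < b"
    using mb real unfolding h_def by simp
  moreover have "\<forall>y. ereal y < b \<longrightarrow> (\<exists>n. y < h n)"
  proof (intro allI impI)
    fix y assume "ereal y < b"
    then have yb: "y < b'" using real by simp
    obtain n where n: "(b' - m) / (b' - y) < real n" using reals_Archimedean2 by blast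
    have "(b' - m) < real n * (b' - y)" using n yb by (simp add: divide_less_eq)
    then have "(b' - m) < (real n + 1) * (b' - y)" using yb by (simp add: distrib_right)
    then have "(b' - m) / (real n + 1) < b' - y" by (simp add: divide_less_eq mult.commute)
    then show "\<exists>n. y < h n" unfolding h_def by (intro exI[of _ n]) simp
  qed
  ultimately show ?thesis by blast
next
  case PInf
  define h where "h n = m + real n" for n
  have "\<forall>y. ereal y < b \<longrightarrow> (\<exists>n. y < h n)"
  proof (intro allI impI)
    fix y
    obtain n where "y - m < real n" using reals_Archimedean2 by blast
    then show "\<exists>n. y < h n" unfolding h_def by (intro exI[of _ n]) simp
  qed
  then show ?thesis using PInf by (intro exI[of _ h]) (auto simp: h_def)
next
  case MInf
  then show ?thesis using assms by simp
qed

lemma int_seq: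
  fixes a b :: ereal
  assumes "a < b"
  shows "\<exists>p::int \<Rightarrow> real. (\<forall>i. a < ereal (p i) \<and> ereal (p i) < b) \<and> (\<forall>i. p i < p (i+1))
          \<and> (\<forall>y. a < ereal y \<and> ereal y < b \<longrightarrow> (\<exists>N::nat. p (- int N) < y \<and> y < p (int N)))"
proof -
  obtain m where m: "a < ereal m" "ereal m < b" using ereal_dense2[OF assms] by blast
  obtain h where h: "h 0 = m" "\<forall>n. h n < h (Suc n)" "\<forall>n. ereal (h n) < b"
     "\<forall>y. ereal y < b \<longrightarrow> (\<exists>n. y < h n)"
    using upper_seq[OF m(2)] by blast
  have m': "ereal (- m) < - a" using m(1) by (cases a) auto
  obtain g where g: "g 0 = -m" "\<forall>n. g n < g (Suc n)" "\<forall>n. ereal (g n) < - a"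
     "\<forall>y. ereal y < - a \<longrightarrow> (\<exists>n. y < g n)"
    using upper_seq[OF m'] by blast
  have hmono: "h i < h j" if "i < j" for i j using h(2) that by (simp add: strict_mono_def lift_Suc_mono_less)
  have gmono: "g i < g j" if "i < j" for i j using g(2) that by (simp add: lift_Suc_mono_less)
  have hmono': "h i \<le> h j" if "i \<le> j" for i j using hmono that by (cases "i = j") (auto simp: less_le)
  have gmono': "g i \<le> g j" if "i \<le> j" for i j using gmono that by (cases "i = j") (auto simp: less_le)
  define p where "p i = (if 0 \<le> i then h (nat i) else - g (nat (- i)))" for i :: int
  have hm: "m \<le> h n" for n using hmono'[of 0 n] h(1) by simp
  have gm: "-m \<le> g n" for n using gmono'[of 0 n] g(1) by simp
  have ga: "a < ereal (- g n)" for n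
    using g(3)[rule_format, of n] by (cases a) auto
  have P1: "a < ereal (p i) \<and> ereal (p i) < b" for i
  proof (cases "0 \<le> i")
    case True
    have "a < ereal m" by (rule m(1))
    also have "ereal m \<le> ereal (h (nat i))" using hm by simp
    finally show ?thesis using True h(3) unfolding p_def by simp
  next
    case False
    have "ereal (- g (nat (-i))) \<le> ereal m" using gm by (simp add: minus_le_iff)
    also have "\<dots> < b" by (rule m(2))
    finally show ?thesis using False ga unfolding p_def by simp
  qed
  have P2: "p i < p (i+1)" for i
  proof -
    consider "0 \<le> i" | "i = -1" | "i < -1" by linarith
    then show ?thesis
    proof cases
      case 1
      then have "nat (i+1) = Suc (nat i)" by simp
      then show ?thesis using 1 h(2) unfolding p_def by simp
    next
      case 2
      have "- g 1 < - g 0" using g(2)[rule_format, of 0] by simp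
      also have "\<dots> = h 0" using g(1) h(1) by simp
      finally show ?thesis using 2 unfolding p_def by simp
    next
      case 3
      then have "nat (-i) = Suc (nat (-(i+1)))" by simp
      then show ?thesis using 3 g(2) unfolding p_def by simp
    qed
  qed
  have P3: "\<exists>N::nat. p (- int N) < y \<and> y < p (int N)" if y: "a < ereal y" "ereal y < b" for y
  proof -
    obtain n1 where n1: "y < h n1" using h(4) y(2) by blast
    have "ereal (- y) < - a" using y(1) by (cases a) auto
    then obtain n2 where n2: "- y < g n2" using g(4) by blast
    define N where "N = max (Suc n1) (Suc n2)"
    have "n1 \<le> N" "n2 \<le> N" unfolding N_def by auto
    then have "y < h N" "- y < g N" using n1 n2 hmono'[of n1 N] gmono'[of n2 N] by auto
    moreover have "N > 0" unfolding N_def by simp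
    ultimately show ?thesis unfolding p_def by (intro exI[of _ N]) auto
  qed
  show ?thesis using P1 P2 P3 by blast
qed



lemma discrete_step:
  fixes f :: "int \<Rightarrow> real"
  shows "f lo \<le> y \<Longrightarrow> y < f (lo + int k) \<Longrightarrow> \<exists>i. f i \<le> y \<and> y < f (i+1)"
proof (induction k)
  case 0 then show ?case by simp
next
  case (Suc k)
  show ?case
  proof (cases "f (lo + int k) \<le> y")
    case True
    then show ?thesis using Suc.prems by (intro exI[of _ "lo + int k"]) (simp add: ac_simps)
  next
    case False
    then show ?thesis using Suc by simp
  qed
qed

lemma affclosed_homogeneous:
  assumes X: "affclosed X" shows "homogeneous X"
  unfolding homogeneous_def
proof (intro allI impI)
  fix a b :: ereal assume ab: "a < b"
  obtain p where p1: "\<forall>i. a < ereal (p i) \<and> ereal (p i) < b" and p2: "\<forall>i. p i < p (i+1)"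
    and p3: "\<forall>y. a < ereal y \<and> ereal y < b \<longrightarrow> (\<exists>N::nat. p (- int N) < y \<and> y < p (int N))"
    using int_seq[OF ab] by blast
  define c where "c i = (SOME q::rat. p i < of_rat q \<and> of_rat q < p (i+1))" for i
  have c: "p i < of_rat (c i) \<and> of_rat (c i) < p (i+1)" for i
    unfolding c_def by (rule someI_ex) (rule of_rat_dense[OF p2[rule_format]])
  define C where "C i = (of_rat (c i) :: real)" for i
  have C1: "a < ereal (C i) \<and> ereal (C i) < b" for i
  proof
    have "a < ereal (p i)" using p1 by blast
    also have "\<dots> < ereal (C i)" using c unfolding C_def by simp
    finally show "a < ereal (C i)" .
    have "ereal (C i) < ereal (p (i+1))" using c unfolding C_def by simp
    also have "\<dots> < b" using p1 by blast
    finally show "ereal (C i) < b" .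
  qed
  have C2: "C i < C (i+1)" for i
    using c[of i] c[of "i+1"] unfolding C_def by linarith
  have C2': "C i \<le> C (i + int k)" for i k
  proof (induction k)
    case 0 then show ?case by simp
  next
    case (Suc k) then show ?case using C2[of "i + int k"] by (simp add: ac_simps)
  qed
  have Cmono: "i \<le> j \<Longrightarrow> C i \<le> C j" for i j
    using C2'[of i "nat (j - i)"] by simp
  have C3: "\<exists>i. C i \<le> y \<and> y < C (i+1)" if y: "a < ereal y" "ereal y < b" for y
  proof -
    obtain N :: nat where N: "p (- int N) < y" "y < p (int N)" using p3 y by blast
    have lo: "C (- int N - 1) \<le> y" using c[of "- int N - 1"] N unfolding C_def by simp
    have hi: "y < C (- int N - 1 + int (2*N+1))"
      using c[of "int N"] N unfolding C_def by simp
    show ?thesis using discrete_step[of C, OF lo hi] .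
  qed
  define phi where "phi x = C \<lfloor>x\<rfloor> + (x - of_int \<lfloor>x\<rfloor>) * (C (\<lfloor>x\<rfloor>+1) - C \<lfloor>x\<rfloor>)" for x
  have F1: "C \<lfloor>x\<rfloor> \<le> phi x \<and> phi x < C (\<lfloor>x\<rfloor>+1)" for x
  proof -
    let ?t = "x - of_int \<lfloor>x\<rfloor>" and ?d = "C (\<lfloor>x\<rfloor>+1) - C \<lfloor>x\<rfloor>"
    have t: "0 \<le> ?t" "?t < 1" by (simp_all add: floor_le_iff) linarith
    have d: "0 < ?d" using C2 by simp
    have "0 \<le> ?t * ?d" using t d by simp
    moreover have "?t * ?d < 1 * ?d" using t d by (intro mult_strict_right_mono) auto
    ultimately show ?thesis unfolding phi_def by simp
  qed
  have F2: "x < y \<Longrightarrow> phi x < phi y" for x y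
  proof -
    assume xy: "x < y"
    show ?thesis
    proof (cases "\<lfloor>x\<rfloor> = \<lfloor>y\<rfloor>")
      case True
      have d: "0 < C (\<lfloor>x\<rfloor>+1) - C \<lfloor>x\<rfloor>" using C2 by simp
      have "(x - of_int \<lfloor>x\<rfloor>) * (C (\<lfloor>x\<rfloor>+1) - C \<lfloor>x\<rfloor>) < (y - of_int \<lfloor>x\<rfloor>) * (C (\<lfloor>x\<rfloor>+1) - C \<lfloor>x\<rfloor>)"
        using xy d by (intro mult_strict_right_mono) auto
      then show ?thesis unfolding phi_def using True by simp
    next
      case False
      then have "\<lfloor>x\<rfloor> < \<lfloor>y\<rfloor>" using floor_mono[of x y] xy by linarith
      then have "\<lfloor>x\<rfloor> + 1 \<le> \<lfloor>y\<rfloor>" by simp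
      then have "C (\<lfloor>x\<rfloor>+1) \<le> C \<lfloor>y\<rfloor>" by (rule Cmono)
      then show ?thesis using F1[of x] F1[of y] by linarith
    qed
  qed
  have F3: "x \<in> X \<Longrightarrow> phi x \<in> X" for x
  proof -
    assume x: "x \<in> X"
    define n where "n = \<lfloor>x\<rfloor>"
    define d where "d = c (n+1) - c n"
    define e where "e = c n - of_int n * d"
    have "d \<noteq> 0" using C2[of n] unfolding d_def C_def by auto
    then have "of_rat d * x + of_rat e \<in> X" using X x unfolding affclosed_def by blast
    moreover have "phi x = of_rat d * x + of_rat e"
      unfolding phi_def C_def d_def e_def n_def[symmetric]
      by (simp add: of_rat_diff of_rat_mult of_rat_add algebra_simps)
    ultimately show ?thesis by simp
  qed
  have F4: "phi x \<in> oint a b" for x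
  proof -
    have "a < ereal (C \<lfloor>x\<rfloor>)" using C1 by blast
    also have "\<dots> \<le> ereal (phi x)" using F1 by simp
    finally have 1: "a < ereal (phi x)" .
    have "ereal (phi x) < ereal (C (\<lfloor>x\<rfloor>+1))" using F1 by simp
    also have "\<dots> < b" using C1 by blast
    finally show ?thesis using 1 unfolding oint_def by simp
  qed
  have F5: "y \<in> phi ` X" if y: "y \<in> X" "y \<in> oint a b" for y
  proof -
    obtain i where i: "C i \<le> y" "y < C (i+1)" using C3 y(2) unfolding oint_def by blast
    define d where "d = c (i+1) - c i"
    have dpos: "0 < (of_rat d :: real)" using C2[of i] unfolding d_def C_def by (simp add: of_rat_diff)
    define s where "s = (y - C i) / of_rat d"
    have s: "0 \<le> s" "s < 1" using i dpos unfolding s_def C_def d_def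
      by (simp_all add: of_rat_diff divide_less_eq)
    define x where "x = of_int i + s"
    have fl: "\<lfloor>x\<rfloor> = i" unfolding x_def using s by (simp add: floor_unique)
    have "phi x = C i + s * of_rat d" unfolding phi_def fl unfolding x_def C_def d_def
      by (simp add: of_rat_diff)
    also have "\<dots> = y" unfolding s_def using dpos by simp
    finally have px: "phi x = y" .
    have "d \<noteq> 0" using dpos by auto
    then have "of_rat (inverse d) * y + of_rat (of_int i - c i / d) \<in> X"
      using X y(1) unfolding affclosed_def by simp
    moreover have "of_rat (inverse d) * y + of_rat (of_int i - c i / d) = x"
      unfolding x_def s_def C_def using \<open>d \<noteq> 0\<close>
      by (simp add: of_rat_diff of_rat_divide of_rat_inverse of_rat_mult field_simps)
    ultimately show ?thesis using px by (metis image_eqI)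
  qed
  have img: "phi ` X = X \<inter> oint a b" using F3 F4 F5 by blast
  show "order_iso X (X \<inter> oint a b)"
    using order_iso_image[of X phi] F2 img by simp
qed



interpretation Qv: vector_space "\<lambda>(q::rat) (x::real). of_rat q * x"
  by unfold_locales (simp_all add: algebra_simps of_rat_add of_rat_mult)

lemma big_subspace:
  "\<exists>(W::real set) \<beta>. \<beta> \<notin> W \<and> (\<forall>x\<in>W. \<forall>y\<in>W. x + y \<in> W) \<and> (\<forall>x\<in>W. \<forall>r. of_rat r * x \<in> W)
     \<and> 1 \<in> W \<and> (\<forall>x. \<exists>k::rat. x - of_rat k * \<beta> \<in> W)"
proof -
  have "\<not> (UNIV::real set) \<subseteq> \<rat>"
    using uncountable_UNIV_real countable_rat countable_subset by blast
  then obtain \<beta> :: real where b: "\<beta> \<notin> \<rat>" by blast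
  have b1: "1 \<noteq> \<beta>" using b by auto
  have b0: "\<beta> \<noteq> 0" using b by auto
  have nsp: "1 \<notin> Qv.span {\<beta>}"
  proof
    assume "1 \<in> Qv.span {\<beta>}"
    then have "1 \<in> range (\<lambda>k. of_rat k * \<beta>)" by (simp only: Qv.span_singleton)
    then obtain k where k: "1 = of_rat k * \<beta>" by blast
    have "inverse (of_rat k) = \<beta>" using inverse_unique[OF k[symmetric]] .
    then have "\<beta> = of_rat (inverse k)" by (simp only: of_rat_inverse)
    then have "\<beta> \<in> \<rat>" by (simp only: Rats_of_rat)
    then show False using b by blast
  qed
  have ind1: "Qv.independent {\<beta>}" using b0 Qv.dependent_single by blast
  have ind: "Qv.independent {1, \<beta>}"
    using Qv.independent_insertI[OF nsp ind1] .
  obtain B where B: "{1, \<beta>} \<subseteq> B" "B \<subseteq> UNIV" "Qv.independent B" "UNIV \<subseteq> Qv.span B"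
    by (rule Qv.maximal_independent_subset_extend[OF subset_UNIV ind])
  define W where "W = Qv.span (B - {\<beta>})"
  have bB: "\<beta> \<in> B" using B(1) by blast
  have "\<beta> \<notin> W"
  proof
    assume "\<beta> \<in> W"
    then have "\<beta> \<in> Qv.span (B - {\<beta>})" unfolding W_def .
    then have "Qv.dependent B" unfolding Qv.dependent_def using bB by blast
    then show False using B(3) by blast
  qed
  moreover have "\<forall>x\<in>W. \<forall>y\<in>W. x + y \<in> W" unfolding W_def using Qv.span_add by blast
  moreover have "\<forall>x\<in>W. \<forall>r. of_rat r * x \<in> W" unfolding W_def using Qv.span_scale by blast
  moreover have "1 \<in> W" unfolding W_def using B(1) b1 by (intro Qv.span_base) blast
  moreover have "\<forall>x. \<exists>k::rat. x - of_rat k * \<beta> \<in> W"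
  proof
    fix x :: real
    have ins: "insert \<beta> (B - {\<beta>}) = B" using bB by blast
    have "x \<in> Qv.span B" using B(4) by blast
    then have "x \<in> Qv.span (insert \<beta> (B - {\<beta>}))" using ins by simp
    then have "x \<in> {x. \<exists>k. x - of_rat k * \<beta> \<in> Qv.span (B - {\<beta>})}" by (simp only: Qv.span_insert)
    then show "\<exists>k::rat. x - of_rat k * \<beta> \<in> W" unfolding W_def by blast
  qed
  ultimately show ?thesis by blast
qed

lemma countable_lepoll_infinite:
  assumes "countable S" "infinite T" shows "S \<lesssim> T"
proof -
  obtain f :: "_ \<Rightarrow> nat" where "inj_on f S" using assms(1) unfolding countable_def by blast
  then have "S \<lesssim> (UNIV :: nat set)" unfolding lepoll_def by blast
  also have "(UNIV :: nat set) \<lesssim> T" using assms(2) infinite_le_lepoll by blast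
  finally show ?thesis .
qed

lemma times_self_eqpoll: "infinite T \<Longrightarrow> T \<times> T \<approx> T"
  by (simp add: eqpoll_iff_card_of_ordIso card_of_Times_same_infinite)

lemma times_countable_lepoll:
  assumes "infinite T" "countable S" shows "T \<times> S \<lesssim> T"
proof -
  have "T \<times> S \<lesssim> T \<times> T" using countable_lepoll_infinite[OF assms(2,1)]
    by (simp add: times_lepoll_mono)
  also have "T \<times> T \<lesssim> T" using times_self_eqpoll[OF assms(1)] eqpoll_imp_lepoll by blast
  finally show ?thesis .
qed




theorem mainTheorem10:
  fixes K :: "real set"
  assumes "infinite K"
  shows "(\<exists>A B :: real set. A \<inter> B = {} \<and> A \<approx> K \<and> B \<approx> K \<and>
            homogeneous A \<and> homogeneous B \<and> everywhere_iso A B)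
         \<and> (\<exists>X :: real set. X \<approx> K \<and> homogeneous X)"
proof -
  obtain W :: "real set" and \<beta> :: real where W: "\<beta> \<notin> W" "\<forall>x\<in>W. \<forall>y\<in>W. x + y \<in> W" "\<forall>x\<in>W. \<forall>r. of_rat r * x \<in> W"
     "1 \<in> W" "\<forall>x. \<exists>k::rat. x - of_rat k * \<beta> \<in> W"
    using big_subspace by blast
  have Wrat: "of_rat q \<in> W" for q
  proof -
    have "of_rat q * 1 \<in> W" using W(3) W(4) by blast
    then show ?thesis by simp
  qed
  have Winf: "infinite W"
  proof
    assume "finite W"
    moreover have "range (of_rat :: rat \<Rightarrow> real) \<subseteq> W" using Wrat by blast
    ultimately have "finite (range (of_rat :: rat \<Rightarrow> real))" using finite_subset by blast
    moreover have "inj (of_rat :: rat \<Rightarrow> real)" by (simp add: inj_on_def)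
    ultimately have "finite (UNIV :: rat set)" using finite_imageD by blast
    then show False by (simp add: infinite_UNIV_char_0)
  qed
  have "(UNIV :: real set) \<subseteq> (\<lambda>(w, k). w + of_rat k * \<beta>) ` (W \<times> (UNIV :: rat set))"
  proof
    fix x :: real
    obtain k where "x - of_rat k * \<beta> \<in> W" using W(5) by blast
    then show "x \<in> (\<lambda>(w, k). w + of_rat k * \<beta>) ` (W \<times> UNIV)"
      by (intro image_eqI[of _ _ "(x - of_rat k * \<beta>, k)"]) auto
  qed
  then have "(UNIV :: real set) \<lesssim> W \<times> (UNIV :: rat set)" by (rule subset_image_lepoll)
  also have "W \<times> (UNIV :: rat set) \<lesssim> W" by (rule times_countable_lepoll[OF Winf]) simp
  finally have RW: "(UNIV :: real set) \<lesssim> W" .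
  have "K \<lesssim> W" using lepoll_trans[OF subset_imp_lepoll[OF subset_UNIV] RW] .
  then obtain f where f: "inj_on f K" "f ` K \<subseteq> W" unfolding lepoll_def by blast
  define T where "T = f ` K"
  have TK: "T \<approx> K" unfolding T_def using f(1) by (rule inj_on_image_eqpoll_self)
  have Tinf: "infinite T" using TK assms eqpoll_finite_iff by blast
  define A where "A = {of_rat r * t + of_rat q | r q t. r \<noteq> 0 \<and> t \<in> T}"
  have AW: "A \<subseteq> W"
  proof
    fix x assume "x \<in> A"
    then obtain r q t where x: "x = of_rat r * t + of_rat q" "t \<in> T" unfolding A_def by blast
    have "t \<in> W" using x(2) f(2) unfolding T_def by blast
    then have "of_rat r * t \<in> W" using W(3) by blast
    then have "of_rat r * t + of_rat q \<in> W" using W(2) Wrat by blast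
    then show "x \<in> W" using x(1) by simp
  qed
  have Aaff: "affclosed A" unfolding affclosed_def
  proof (intro ballI allI impI)
    fix x and r q :: rat assume x: "x \<in> A" and r: "r \<noteq> 0"
    then obtain r' q' t where x: "x = of_rat r' * t + of_rat q'" "t \<in> T" "r' \<noteq> 0" unfolding A_def by blast
    have "of_rat r * x + of_rat q = of_rat (r * r') * t + of_rat (r * q' + q)"
      unfolding x(1) by (simp add: of_rat_mult of_rat_add algebra_simps)
    moreover have "r * r' \<noteq> 0" using r x(3) by simp
    ultimately show "of_rat r * x + of_rat q \<in> A" unfolding A_def using x(2)
      by (intro CollectI exI[of _ "r * r'"] exI[of _ "r * q' + q"] exI[of _ t]) simp
  qed
  have TA: "T \<subseteq> A"
  proof
    fix t assume t: "t \<in> T"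
    have "t = of_rat 1 * t + of_rat 0 \<and> (1::rat) \<noteq> 0 \<and> t \<in> T" using t by simp
    then show "t \<in> A" unfolding A_def by blast
  qed
  have "A \<subseteq> (\<lambda>(t, r, q). of_rat r * t + of_rat q) ` (T \<times> (UNIV :: (rat \<times> rat) set))"
  proof
    fix x assume "x \<in> A"
    then obtain r q t where x: "x = of_rat r * t + of_rat q" "t \<in> T" unfolding A_def by blast
    show "x \<in> (\<lambda>(t, r, q). of_rat r * t + of_rat q) ` (T \<times> (UNIV :: (rat \<times> rat) set))"
      using x by (intro image_eqI[of _ _ "(t, r, q)"]) auto
  qed
  then have "A \<lesssim> T \<times> (UNIV :: (rat \<times> rat) set)" by (rule subset_image_lepoll)
  also have "T \<times> (UNIV :: (rat \<times> rat) set) \<lesssim> T" by (rule times_countable_lepoll[OF Tinf]) simp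
  finally have "A \<lesssim> T" .
  then have AT: "A \<approx> T" using subset_imp_lepoll[OF TA] lepoll_antisym by blast
  have AK: "A \<approx> K" using AT TK eqpoll_trans by blast
  define B where "B = (\<lambda>x. x + \<beta>) ` A"
  have BA: "B \<approx> A" unfolding B_def by (rule inj_on_image_eqpoll_self) (simp add: inj_on_def)
  have BK: "B \<approx> K" using BA AK eqpoll_trans by blast
  have disj: "A \<inter> B = {}"
  proof (rule ccontr)
    assume "A \<inter> B \<noteq> {}"
    then obtain y a where y: "y \<in> A" "a \<in> A" "y = a + \<beta>" unfolding B_def by blast
    have "y \<in> W" "a \<in> W" using y AW by auto
    then have "of_rat (-1) * a \<in> W" using W(3) by blast
    then have "y + of_rat (-1) * a \<in> W" using W(2) \<open>y \<in> W\<close> by blast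
    then show False using y(3) W(1) by (simp add: of_rat_minus)
  qed
  have hA: "homogeneous A" using affclosed_homogeneous[OF Aaff] .
  have hB: "homogeneous B" unfolding B_def using homogeneous_translate[OF hA] .
  have AB: "order_iso A B" unfolding B_def by (rule order_iso_image) auto
  have ev: "everywhere_iso A B" unfolding everywhere_iso_def
  proof (intro conjI allI impI)
    show "A \<inter> B = {}" by (rule disj)
    fix a b :: ereal assume ab: "a < b"
    have 1: "order_iso (A \<inter> oint a b) A" using hA ab unfolding homogeneous_def by (blast intro: order_iso_sym)
    have 2: "order_iso B (B \<inter> oint a b)" using hB ab unfolding homogeneous_def by blast
    show "order_iso (A \<inter> oint a b) (B \<inter> oint a b)"
      using order_iso_trans[OF order_iso_trans[OF 1 AB] 2] .
  qed
  show ?thesis using disj AK BK hA hB ev by blast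
qed

end
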